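(* Let $r,n\ge2$, $\pi=A_1\cdots A_n\in\mathbb{S}_{2rn}$ with $A_j=(2r(j-1)+1\ \cdots\ 2rj)$, and $\mathcal{C}$ its conjugacy class. Let $t\in\mathcal{C}$ with $t\pi=\pi t$ and $g\in\mathbb{S}_{2rn}$ with $g\pi g^{-1}=t$. Write $t=A_1^{d_1}\cdots A_n^{d_n}B$ and $g^{-1}\pi g=A_1^{e_1}\cdots A_n^{e_n}B'$ with $0\le d_j,e_j\le 2r-1$ and $B,B'\in\langle B_1,\dots,B_{n-1}\rangle$. (a) If $n$ is odd, then $\sum_{j=1}^n(e_j+d_j)$ is even. (b) If $r$ and $n$ are both even, then $\sum_{j=1}^n(e_j+d_j)\equiv0\pmod 4$.
   Context: Permutations are composed right to left. $B_i$ ($1\le i\le n-1$) is the involution exchanging $2r(i-1)+m\leftrightarrow 2ri+m$ for $1\le m\le 2r$. The centralizer of $\pi$ is $\mathbb{S}_{2rn}^\pi=\langle A_1,\dots,A_n\rangle\rtimes\langle B_1,\dots,B_{n-1}\rangle\cong\mathbb{Z}_{2r}^n\rtimes\mathbb{S}_n$, so every element of it is uniquely written $A_1^{d_1}\cdots A_n^{d_n}B$ with $0\le d_j\le 2r-1$ and $B\in\langle B_1,\dots,B_{n-1}\rangle$; both $t$ and $g^{-1}\pi g$ lie in this centralizer. *)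

theory Defs
  imports "HOL-Combinatorics.Permutations"
begin

text \<open>Permutations of {1..2rn} are functions nat => nat that permute this set;
  composition is right to left, i.e. (g h)(x) = g (h x), which is the HOL composition.\<close>

definition cycA :: "nat \<Rightarrow> nat \<Rightarrow> nat \<Rightarrow> nat" where
  "cycA r j x = (if 2*r*(j-1) < x \<and> x \<le> 2*r*j
                 then (if x = 2*r*j then 2*r*(j-1) + 1 else x + 1) else x)"

definition invB :: "nat \<Rightarrow> nat \<Rightarrow> nat \<Rightarrow> nat" where
  "invB r i x = (if 2*r*(i-1) < x \<and> x \<le> 2*r*i then x + 2*r
                 else if 2*r*i < x \<and> x \<le> 2*r*(i+1) then x - 2*r else x)"

definition Apow_prod :: "nat \<Rightarrow> nat \<Rightarrow> (nat \<Rightarrow> nat) \<Rightarrow> nat \<Rightarrow> nat" where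
  "Apow_prod r n d = foldr (\<lambda>j f. (cycA r j ^^ d j) \<circ> f) [1..<n+1] id"

definition piperm :: "nat \<Rightarrow> nat \<Rightarrow> nat \<Rightarrow> nat" where
  "piperm r n = Apow_prod r n (\<lambda>_. 1)"

text \<open>The subgroup generated by B_1, ..., B_{n-1} (the B_i are involutions,
  so finite products of generators suffice).\<close>
inductive_set Bgroup :: "nat \<Rightarrow> nat \<Rightarrow> (nat \<Rightarrow> nat) set" for r n where
  Bid: "id \<in> Bgroup r n"
| Bstep: "\<lbrakk>B \<in> Bgroup r n; 1 \<le> i; i \<le> n - 1\<rbrakk> \<Longrightarrow> invB r i \<circ> B \<in> Bgroup r n"

end

theory Submission
  imports Defs "HOL-Combinatorics.Cycles"
begin

definition pt :: "nat \<Rightarrow> nat \<Rightarrow> nat \<Rightarrow> nat" where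
  "pt r j i = 2*r*(j-1) + i + 1"

lemma blockcond:
  assumes "j \<ge> 1" "j' \<ge> 1" "i < 2*r"
  shows "(2*r*(j-1) < pt r j' i \<and> pt r j' i \<le> 2*r*j) \<longleftrightarrow> j' = j"
proof -
  obtain b where b: "j = Suc b" using assms(1) by (cases j) auto
  obtain b' where b': "j' = Suc b'" using assms(2) by (cases j') auto
  have "(2*r*b < 2*r*b' + i + 1 \<and> 2*r*b' + i + 1 \<le> 2*r*b + 2*r) \<longleftrightarrow> b' = b"
  proof
    assume h: "2*r*b < 2*r*b' + i + 1 \<and> 2*r*b' + i + 1 \<le> 2*r*b + 2*r"
    show "b' = b"
    proof (rule ccontr)
      assume "b' \<noteq> b"
      then consider "b' + 1 \<le> b" | "b + 1 \<le> b'" by linarith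
      then show False
      proof cases
        case 1
        then have "2*r*(b'+1) \<le> 2*r*b" by (rule mult_le_mono2)
        then show False using h assms(3) by (simp add: algebra_simps)
      next
        case 2
        then have "2*r*(b+1) \<le> 2*r*b'" by (rule mult_le_mono2)
        then show False using h by (simp add: algebra_simps)
      qed
    qed
  next
    assume "b' = b" then show "2*r*b < 2*r*b' + i + 1 \<and> 2*r*b' + i + 1 \<le> 2*r*b + 2*r"
      using assms(3) by simp
  qed
  then show ?thesis using b b' by (simp add: pt_def algebra_simps)
qed

lemma pt_inj:
  assumes "j \<ge> 1" "j' \<ge> 1" "i < 2*r" "i' < 2*r"
  shows "pt r j i = pt r j' i' \<longleftrightarrow> j = j' \<and> i = i'"
proof
  assume h: "pt r j i = pt r j' i'"
  have "j' = j" using blockcond[OF assms(1) assms(2) assms(4)] blockcond[OF assms(1) assms(1) assms(3)]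
    h by simp
  then show "j = j' \<and> i = i'" using h by (simp add: pt_def)
qed simp

lemma pt_range:
  assumes "1 \<le> j" "j \<le> n" "i < 2*r"
  shows "pt r j i \<in> {1..2*r*n}"
proof -
  obtain b where b: "j = Suc b" using assms(1) by (cases j) auto
  have "2*r*b + 2*r \<le> 2*r*n" using assms b mult_le_mono2[of "Suc b" n "2*r"] by (simp add: algebra_simps)
  then show ?thesis using b assms by (simp add: pt_def)
qed

lemma pt_surj:
  assumes "p \<in> {1..2*r*n}" "r > 0"
  shows "p = pt r ((p-1) div (2*r) + 1) ((p-1) mod (2*r))"
    "1 \<le> (p-1) div (2*r) + 1" "(p-1) div (2*r) + 1 \<le> n" "(p-1) mod (2*r) < 2*r"
proof -
  show "p = pt r ((p-1) div (2*r) + 1) ((p-1) mod (2*r))"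
    using assms by (simp add: pt_def)
  show "1 \<le> (p-1) div (2*r) + 1" by simp
  have "p - 1 < 2*r*n" using assms by auto
  then have "(p-1) div (2*r) < n" using assms(2) by (simp add: div_less_iff_less_mult mult.commute)
  then show "(p-1) div (2*r) + 1 \<le> n" by simp
  show "(p-1) mod (2*r) < 2*r" using assms by simp
qed

lemma pt_cases:
  assumes "p \<in> {1..2*r*n}" "r > 0"
  obtains j i where "1 \<le> j" "j \<le> n" "i < 2*r" "p = pt r j i"
  using pt_surj[OF assms] by blast

lemma cycA_pt:
  assumes "j \<ge> 1" "j' \<ge> 1" "i < 2*r"
  shows "cycA r j (pt r j' i) = (if j' = j then pt r j ((i+1) mod (2*r)) else pt r j' i)"
proof (cases "j' = j")
  case True
  obtain b where b: "j = Suc b" using assms(1) by (cases j) auto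
  show ?thesis
  proof (cases "i + 1 = 2*r")
    case True
    then show ?thesis using \<open>j' = j\<close> blockcond[OF assms] b by (simp add: cycA_def pt_def)
  next
    case False
    then have "i + 1 < 2*r" using assms by simp
    have "pt r j i \<noteq> 2*r*j" using \<open>i + 1 < 2*r\<close> b by (simp add: pt_def)
    then show ?thesis using \<open>j' = j\<close> blockcond[OF assms] \<open>i + 1 < 2*r\<close>
      by (simp add: cycA_def pt_def)
  qed
next
  case False
  have nc: "\<not> (2*r*(j-1) < pt r j' i \<and> pt r j' i \<le> 2*r*j)" using blockcond[OF assms] False by simp
  show ?thesis unfolding cycA_def by (subst if_not_P[OF nc], subst if_not_P[OF False], rule refl)
qed

lemma cycA_out:
  assumes "x \<notin> {1..2*r*n}" "1 \<le> j" "j \<le> n"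
  shows "cycA r j x = x"
proof -
  have h: "2*r*j \<le> 2*r*n" using assms by simp
  have "\<not> (2*r*(j-1) < x \<and> x \<le> 2*r*j)"
  proof
    assume a: "2*r*(j-1) < x \<and> x \<le> 2*r*j"
    then have "x \<le> 2*r*n" using h by linarith
    moreover have "1 \<le> x" using a by linarith
    ultimately show False using assms(1) by auto
  qed
  then show ?thesis unfolding cycA_def by (rule if_not_P)
qed

lemma cycA_pow_pt:
  assumes "j \<ge> 1" "j' \<ge> 1" "i < 2*r"
  shows "(cycA r j ^^ c) (pt r j' i) = (if j' = j then pt r j ((i+c) mod (2*r)) else pt r j' i)"
proof (induction c)
  case 0
  then show ?case using assms by auto
next
  case (Suc c)
  have r: "r > 0" using assms by simp
  show ?case
  proof (cases "j' = j")
    case True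
    have "(cycA r j ^^ Suc c) (pt r j' i) = cycA r j (pt r j ((i+c) mod (2*r)))"
      using Suc True by simp
    also have "\<dots> = pt r j (((i+c) mod (2*r) + 1) mod (2*r))"
      using cycA_pt[OF assms(1) assms(1), of "(i+c) mod (2*r)"] r by simp
    also have "((i+c) mod (2*r) + 1) mod (2*r) = (i + Suc c) mod (2*r)"
      by (simp add: mod_Suc_eq)
    finally show ?thesis using True by simp
  next
    case False
    then show ?thesis using Suc cycA_pt[OF assms] by simp
  qed
qed

lemma cycA_pow_out:
  assumes "x \<notin> {1..2*r*n}" "1 \<le> j" "j \<le> n"
  shows "(cycA r j ^^ c) x = x"
  by (induction c) (use cycA_out[OF assms] in auto)

lemma foldr_pt:
  assumes "distinct js" "set js \<subseteq> {1..n}" "j' \<ge> 1" "i < 2*r"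
  shows "foldr (\<lambda>j f. (cycA r j ^^ a j) \<circ> f) js id (pt r j' i)
     = (if j' \<in> set js then pt r j' ((i + a j') mod (2*r)) else pt r j' i)"
  using assms(1,2)
proof (induction js)
  case Nil
  then show ?case by simp
next
  case (Cons j js)
  have j1: "j \<ge> 1" using Cons by auto
  have IH: "foldr (\<lambda>j f. (cycA r j ^^ a j) \<circ> f) js id (pt r j' i)
     = (if j' \<in> set js then pt r j' ((i + a j') mod (2*r)) else pt r j' i)"
    by (rule Cons.IH) (use Cons.prems in auto)
  have step: "foldr (\<lambda>j f. (cycA r j ^^ a j) \<circ> f) (j#js) id (pt r j' i)
     = (cycA r j ^^ a j) (foldr (\<lambda>j f. (cycA r j ^^ a j) \<circ> f) js id (pt r j' i))" by simp
  show ?case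
  proof (cases "j' \<in> set js")
    case True
    then have "j' \<noteq> j" using Cons by auto
    have "(i + a j') mod (2*r) < 2*r" using assms by simp
    then have "(cycA r j ^^ a j) (pt r j' ((i + a j') mod (2*r))) = pt r j' ((i + a j') mod (2*r))"
      using \<open>j' \<noteq> j\<close> cycA_pow_pt[OF j1 assms(3), of "(i + a j') mod (2*r)"] by simp
    then show ?thesis unfolding step IH using True by simp
  next
    case False
    then show ?thesis unfolding step IH using cycA_pow_pt[OF j1 assms(3) assms(4)] by auto
  qed
qed

lemma foldr_out:
  assumes "set js \<subseteq> {1..n}" "x \<notin> {1..2*r*n}"
  shows "foldr (\<lambda>j f. (cycA r j ^^ a j) \<circ> f) js id x = x"
  using assms(1)
proof (induction js)
  case Nil then show ?case by simp
next
  case (Cons j js)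
  then show ?case using cycA_pow_out[OF assms(2)] by auto
qed

lemma Apow_pt:
  assumes "1 \<le> j" "j \<le> n" "i < 2*r"
  shows "Apow_prod r n a (pt r j i) = pt r j ((i + a j) mod (2*r))"
proof -
  have ds: "distinct [1..<n+1]" by simp
  have ss: "set [1..<n+1] \<subseteq> {1..n}" by auto
  have jin: "j \<in> set [1..<n+1]" using assms by auto
  have X: "foldr (\<lambda>j f. (cycA r j ^^ a j) \<circ> f) [1..<n+1] id (pt r j i)
     = (if j \<in> set [1..<n+1] then pt r j ((i + a j) mod (2*r)) else pt r j i)"
    by (rule foldr_pt[OF ds ss assms(1) assms(3)])
  show ?thesis unfolding Apow_prod_def X by (subst if_P[OF jin], rule refl)
qed

lemma Apow_out:
  assumes "x \<notin> {1..2*r*n}"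
  shows "Apow_prod r n a x = x"
proof -
  have "set [1..<n+1] \<subseteq> {1..n}" by auto
  from foldr_out[OF this assms] show ?thesis unfolding Apow_prod_def .
qed

lemma invB_pt:
  assumes "1 \<le> i" "i \<le> n - 1" "1 \<le> j" "ii < 2*r"
  shows "invB r i (pt r j ii) = pt r (Transposition.transpose i (i+1) j) ii"
proof -
  have c1: "(2*r*(i-1) < pt r j ii \<and> pt r j ii \<le> 2*r*i) \<longleftrightarrow> j = i"
    using blockcond[OF assms(1) assms(3) assms(4)] by simp
  have c2: "(2*r*i < pt r j ii \<and> pt r j ii \<le> 2*r*(i+1)) \<longleftrightarrow> j = i + 1"
    using blockcond[of "i+1" j ii r] assms by simp
  show ?thesis
  proof (cases "j = i")
    case True
    obtain b where b: "i = Suc b" using assms(1) by (cases i) auto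
    then show ?thesis using c1 assms True by (simp add: invB_def pt_def transpose_def algebra_simps)
  next
    case False
    note F = False
    show ?thesis
    proof (cases "j = i + 1")
      case True
      obtain b where b: "i = Suc b" using assms(1) by (cases i) auto
      then show ?thesis using c1 c2 F assms True by (simp add: invB_def pt_def transpose_def algebra_simps)
    next
      case False
      have nc1: "\<not> (2*r*(i-1) < pt r j ii \<and> pt r j ii \<le> 2*r*i)" using c1 F by simp
      have nc2: "\<not> (2*r*i < pt r j ii \<and> pt r j ii \<le> 2*r*(i+1))" using c2 False by simp
      have "Transposition.transpose i (i+1) j = j" using F False by (simp add: transpose_def)
      then show ?thesis by (simp only: invB_def if_not_P[OF nc1] if_not_P[OF nc2])
    qed
  qed
qed

lemma invB_out:
  assumes "1 \<le> i" "i \<le> n - 1" "x \<notin> {1..2*r*n}"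
  shows "invB r i x = x"
proof -
  have "i + 1 \<le> n" using assms by simp
  then have h: "2*r*(i+1) \<le> 2*r*n" by (rule mult_le_mono2)
  have nc1: "\<not> (2*r*(i-1) < x \<and> x \<le> 2*r*i)" and nc2: "\<not> (2*r*i < x \<and> x \<le> 2*r*(i+1))"
    using h assms(3) by auto
  show ?thesis by (simp only: invB_def if_not_P[OF nc1] if_not_P[OF nc2])
qed

lemma Bgroup_form:
  assumes "B \<in> Bgroup r n"
  shows "\<exists>\<tau>. \<tau> permutes {1..n} \<and> (\<forall>j\<in>{1..n}. \<forall>i<2*r. B (pt r j i) = pt r (\<tau> j) i)
           \<and> (\<forall>x. x \<notin> {1..2*r*n} \<longrightarrow> B x = x)"
  using assms
proof (induction rule: Bgroup.induct)
  case Bid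
  show ?case
  proof (intro exI conjI)
    show "id permutes {1..n}" by (rule permutes_id)
  qed auto
next
  case (Bstep B i)
  then obtain \<tau> where t: "\<tau> permutes {1..n}" "\<forall>j\<in>{1..n}. \<forall>i<2*r. B (pt r j i) = pt r (\<tau> j) i"
    "\<forall>x. x \<notin> {1..2*r*n} \<longrightarrow> B x = x" by blast
  let ?s = "Transposition.transpose i (i+1) \<circ> \<tau>"
  have "Transposition.transpose i (i+1) permutes {1..n}"
    using Bstep by (intro permutes_swap_id) auto
  then have ps: "?s permutes {1..n}" using permutes_compose[OF t(1)] by blast
  have "\<forall>j\<in>{1..n}. \<forall>ii<2*r. (invB r i \<circ> B) (pt r j ii) = pt r (?s j) ii"
  proof (intro ballI allI impI)
    fix j ii assume j: "j \<in> {1..n}" and ii: "ii < 2*r"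
    have "\<tau> j \<in> {1..n}" using permutes_in_image[OF t(1)] j by blast
    then show "(invB r i \<circ> B) (pt r j ii) = pt r (?s j) ii"
      using t(2) j ii invB_pt[OF Bstep(2) Bstep(3), of "\<tau> j" ii] by auto
  qed
  moreover have "\<forall>x. x \<notin> {1..2*r*n} \<longrightarrow> (invB r i \<circ> B) x = x"
    using t(3) invB_out[OF Bstep(2) Bstep(3)] by auto
  ultimately show ?case using ps by blast
qed

definition cform :: "nat \<Rightarrow> nat \<Rightarrow> (nat \<Rightarrow> nat) \<Rightarrow> (nat \<Rightarrow> nat) \<Rightarrow> (nat \<Rightarrow> nat) \<Rightarrow> bool" where
  "cform r n y \<tau> a \<longleftrightarrow> \<tau> permutes {1..n} \<and>
     (\<forall>j\<in>{1..n}. \<forall>i<2*r. y (pt r j i) = pt r (\<tau> j) ((i + a (\<tau> j)) mod (2*r)))"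

definition Ssum :: "(nat \<Rightarrow> nat) \<Rightarrow> (nat \<Rightarrow> nat) \<Rightarrow> nat \<Rightarrow> nat \<Rightarrow> nat" where
  "Ssum \<tau> a b j = (\<Sum>l\<in>{1..b}. a ((\<tau>^^l) j))"

definition per :: "(nat \<Rightarrow> nat) \<Rightarrow> nat \<Rightarrow> nat" where
  "per \<tau> j = (LEAST k. 0 < k \<and> (\<tau>^^k) j = j)"

lemma cent_cform:
  assumes "B \<in> Bgroup r n"
  shows "\<exists>\<tau>. cform r n (Apow_prod r n a \<circ> B) \<tau> a"
proof -
  obtain \<tau> where t: "\<tau> permutes {1..n}" "\<forall>j\<in>{1..n}. \<forall>i<2*r. B (pt r j i) = pt r (\<tau> j) i"
    using Bgroup_form[OF assms] by blast
  have "\<forall>j\<in>{1..n}. \<forall>i<2*r. (Apow_prod r n a \<circ> B) (pt r j i) = pt r (\<tau> j) ((i + a (\<tau> j)) mod (2*r))"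
  proof (intro ballI allI impI)
    fix j i assume j: "j \<in> {1..n}" and i: "i < 2*r"
    have "\<tau> j \<in> {1..n}" using permutes_in_image[OF t(1)] j by blast
    then have "1 \<le> \<tau> j" "\<tau> j \<le> n" by auto
    have "B (pt r j i) = pt r (\<tau> j) i" using t(2) j i by blast
    then show "(Apow_prod r n a \<circ> B) (pt r j i) = pt r (\<tau> j) ((i + a (\<tau> j)) mod (2*r))"
      using Apow_pt[OF \<open>1 \<le> \<tau> j\<close> \<open>\<tau> j \<le> n\<close> i, of a] by simp
  qed
  then show ?thesis using t(1) unfolding cform_def by blast
qed

lemma pi_cform: "cform r n (piperm r n) id (\<lambda>_. 1)"
proof -
  have "Apow_prod r n (\<lambda>_. 1) \<circ> id = piperm r n" by (simp add: piperm_def)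
  moreover have "\<forall>j\<in>{1..n}. \<forall>i<2*r. (Apow_prod r n (\<lambda>_. 1) \<circ> id) (pt r j i) = pt r (id j) ((i + 1) mod (2*r))"
  proof (intro ballI allI impI)
    fix j i assume "j \<in> {1..n}" "i < 2*r"
    then show "(Apow_prod r n (\<lambda>_. 1) \<circ> id) (pt r j i) = pt r (id j) ((i + 1) mod (2*r))"
      using Apow_pt[of j n i r "\<lambda>_. 1"] by simp
  qed
  moreover have "id permutes {1..n}" by (rule permutes_id)
  ultimately show ?thesis unfolding cform_def by simp
qed

lemma funpow_permutes:
  assumes "\<tau> permutes S" shows "(\<tau>^^b) permutes S"
proof (induction b)
  case 0
  show ?case unfolding funpow.simps(1) by (rule permutes_id)
next
  case (Suc b)
  show ?case unfolding funpow.simps(2) by (rule permutes_compose[OF Suc.IH assms])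
qed

lemma funpow_in:
  assumes "\<tau> permutes S" "j \<in> S" shows "(\<tau>^^b) j \<in> S"
  using permutes_in_image[OF funpow_permutes[OF assms(1)]] assms(2) by simp

lemma funpow_apply: "(f^^(m+n)) x = (f^^m) ((f^^n) x)"
  by (simp only: funpow_add o_apply)

lemma Ssum_Suc: "Ssum \<tau> a (Suc b) j = Ssum \<tau> a b j + a ((\<tau>^^Suc b) j)"
  unfolding Ssum_def by simp

lemma cform_pow:
  assumes "cform r n y \<tau> a" "j \<in> {1..n}" "i < 2*r"
  shows "(y^^b) (pt r j i) = pt r ((\<tau>^^b) j) ((i + Ssum \<tau> a b j) mod (2*r))"
proof (induction b)
  case 0
  then show ?case using assms by (simp add: Ssum_def)
next
  case (Suc b)
  have tp: "\<tau> permutes {1..n}" using assms(1) by (simp add: cform_def)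
  have jb: "(\<tau>^^b) j \<in> {1..n}" using funpow_in[OF tp assms(2)] .
  have ib: "(i + Ssum \<tau> a b j) mod (2*r) < 2*r" using assms(3) by simp
  have "(y^^Suc b) (pt r j i) = y (pt r ((\<tau>^^b) j) ((i + Ssum \<tau> a b j) mod (2*r)))"
    using Suc by simp
  also have "\<dots> = pt r (\<tau> ((\<tau>^^b) j)) (((i + Ssum \<tau> a b j) mod (2*r) + a (\<tau> ((\<tau>^^b) j))) mod (2*r))"
  proof -
    have "\<forall>j\<in>{1..n}. \<forall>i<2*r. y (pt r j i) = pt r (\<tau> j) ((i + a (\<tau> j)) mod (2*r))"
      using assms(1) unfolding cform_def by (rule conjunct2)
    then show ?thesis using jb ib by blast
  qed
  also have "((i + Ssum \<tau> a b j) mod (2*r) + a (\<tau> ((\<tau>^^b) j))) mod (2*r)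
      = (i + Ssum \<tau> a b j + a (\<tau> ((\<tau>^^b) j))) mod (2*r)"
    by (rule mod_add_left_eq)
  also have "i + Ssum \<tau> a b j + a (\<tau> ((\<tau>^^b) j)) = i + Ssum \<tau> a (Suc b) j"
    unfolding Ssum_Suc by simp
  also have "\<tau> ((\<tau>^^b) j) = (\<tau>^^Suc b) j" by simp
  finally show ?case .
qed

lemma Ssum_add: "Ssum \<tau> a (b + c) j = Ssum \<tau> a b j + Ssum \<tau> a c ((\<tau>^^b) j)"
proof (induction c)
  case 0
  then show ?case by (simp add: Ssum_def)
next
  case (Suc c)
  have "(\<tau>^^Suc (b + c)) j = (\<tau>^^Suc c) ((\<tau>^^b) j)"
    using funpow_apply[where f=\<tau> and m="Suc c" and n=b and x=j] by (simp add: add.commute)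
  then show ?case using Suc by (simp add: Ssum_Suc)
qed

lemma Ssum_mult:
  assumes "(\<tau>^^k) j = j"
  shows "Ssum \<tau> a (m*k) j = m * Ssum \<tau> a k j"
proof (induction m)
  case 0
  then show ?case by (simp add: Ssum_def)
next
  case (Suc m)
  have "Suc m * k = k + m*k" by simp
  then have "Ssum \<tau> a (Suc m * k) j = Ssum \<tau> a (k + m*k) j" by (rule arg_cong)
  also have "\<dots> = Ssum \<tau> a k j + Ssum \<tau> a (m*k) ((\<tau>^^k) j)"
    by (rule Ssum_add)
  also have "\<dots> = Ssum \<tau> a k j + m * Ssum \<tau> a k j"
    unfolding assms Suc.IH ..
  finally show ?case by simp
qed

lemma Ssum_shift:
  assumes "(\<tau>^^k) j = j"
  shows "Ssum \<tau> a k (\<tau> j) = Ssum \<tau> a k j"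
proof -
  have e1: "Ssum \<tau> a (1 + k) j = Ssum \<tau> a 1 j + Ssum \<tau> a k ((\<tau>^^1) j)"
    by (rule Ssum_add)
  have e2: "Ssum \<tau> a (k + 1) j = Ssum \<tau> a k j + Ssum \<tau> a 1 ((\<tau>^^k) j)"
    by (rule Ssum_add)
  have "1 + k = k + 1" by simp
  then have "Ssum \<tau> a 1 j + Ssum \<tau> a k ((\<tau>^^1) j) = Ssum \<tau> a k j + Ssum \<tau> a 1 j"
    using e1 e2 assms by metis
  then show ?thesis by simp
qed

lemma per_basic:
  fixes \<tau> :: "nat \<Rightarrow> nat"
  assumes "0 < N" "(\<tau>^^N) j = j"
  shows "0 < per \<tau> j \<and> (\<tau>^^(per \<tau> j)) j = j"
proof -
  have ex: "\<exists>k. 0 < k \<and> (\<tau>^^k) j = j" using assms by blast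
  show ?thesis unfolding per_def by (rule LeastI_ex[OF ex])
qed

lemma per_least:
  "0 < k \<Longrightarrow> (\<tau>^^k) j = j \<Longrightarrow> per \<tau> j \<le> k"
  unfolding per_def by (rule Least_le) simp

lemma per_dvd:
  fixes \<tau> :: "nat \<Rightarrow> nat"
  assumes "0 < N" "(\<tau>^^N) j = j"
  shows "(\<tau>^^b) j = j \<longleftrightarrow> per \<tau> j dvd b"
proof
  have P: "0 < per \<tau> j" "(\<tau>^^(per \<tau> j)) j = j" using per_basic[OF assms] by auto
  {
    assume h: "(\<tau>^^b) j = j"
    have m: "(\<tau>^^(b mod per \<tau> j)) j = j"
      using funpow_mod_eq[where f=\<tau> and n="per \<tau> j" and x=j and m=b] P h by simp
    have "b mod per \<tau> j = 0"
    proof (rule ccontr)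
      assume "b mod per \<tau> j \<noteq> 0"
      then have "per \<tau> j \<le> b mod per \<tau> j"
        using per_least[of "b mod per \<tau> j" \<tau> j] m by simp
      moreover have "b mod per \<tau> j < per \<tau> j" using P by simp
      ultimately show False by simp
    qed
    then show "per \<tau> j dvd b" by (simp add: dvd_eq_mod_eq_0)
  }
  assume "per \<tau> j dvd b"
  then obtain c where c: "b = per \<tau> j * c" by (auto simp: dvd_def)
  have "(\<tau>^^(per \<tau> j * c)) j = j"
  proof (induction c)
    case (Suc c)
    have "(\<tau>^^(per \<tau> j * Suc c)) j = (\<tau>^^(per \<tau> j)) ((\<tau>^^(per \<tau> j * c)) j)"
      using funpow_apply[where f=\<tau> and m="per \<tau> j" and n="per \<tau> j * c" and x=j] by simp
    then show ?case using Suc P by simp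
  qed simp
  then show "(\<tau>^^b) j = j" using c by simp
qed

lemma perm_nilp:
  fixes \<tau> :: "nat \<Rightarrow> nat"
  assumes "\<tau> permutes {1..n}"
  obtains N where "0 < N" "\<tau>^^N = id"
proof -
  have "finite {1..n::nat}" by simp
  then have "permutation \<tau>" using permutes_imp_permutation assms by blast
  then show ?thesis using that permutation_is_nilpotent by blast
qed

lemma per_perm:
  fixes \<tau> :: "nat \<Rightarrow> nat"
  assumes "\<tau> permutes {1..n}"
  shows "0 < per \<tau> j" "(\<tau>^^(per \<tau> j)) j = j" "\<And>b. (\<tau>^^b) j = j \<longleftrightarrow> per \<tau> j dvd b"
proof -
  obtain N where N: "0 < N" "\<tau>^^N = id" using perm_nilp[OF assms] by blast
  then have "(\<tau>^^N) j = j" by simp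
  from per_basic[OF N(1) this] show "0 < per \<tau> j" "(\<tau>^^(per \<tau> j)) j = j" by auto
  from per_dvd[OF N(1) \<open>(\<tau>^^N) j = j\<close>] show "\<And>b. (\<tau>^^b) j = j \<longleftrightarrow> per \<tau> j dvd b" by blast
qed

lemma per_step:
  fixes \<tau> :: "nat \<Rightarrow> nat"
  assumes "\<tau> permutes {1..n}"
  shows "per \<tau> (\<tau> j) = per \<tau> j"
proof -
  have inj: "inj \<tau>" using assms by (rule permutes_inj)
  have h: "(\<tau>^^b) (\<tau> j) = \<tau> j \<longleftrightarrow> (\<tau>^^b) j = j" for b
  proof -
    have "(\<tau>^^b) (\<tau> j) = \<tau> ((\<tau>^^b) j)" by (simp add: funpow_swap1)
    then show ?thesis using inj by (simp add: inj_eq)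
  qed
  have d1: "per \<tau> (\<tau> j) dvd per \<tau> j"
  proof -
    have "(\<tau>^^(per \<tau> j)) j = j" by (rule per_perm(2)[OF assms])
    then have "(\<tau>^^(per \<tau> j)) (\<tau> j) = \<tau> j" using h by blast
    then show ?thesis using per_perm(3)[OF assms, where j="\<tau> j" and b="per \<tau> j"] by blast
  qed
  have d2: "per \<tau> j dvd per \<tau> (\<tau> j)"
  proof -
    have "(\<tau>^^(per \<tau> (\<tau> j))) (\<tau> j) = \<tau> j" by (rule per_perm(2)[OF assms])
    then have "(\<tau>^^(per \<tau> (\<tau> j))) j = j" using h by blast
    then show ?thesis using per_perm(3)[OF assms, where j=j and b="per \<tau> (\<tau> j)"] by blast
  qed
  show ?thesis using d1 d2 by (rule dvd_antisym)
qed

lemma NT: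
  fixes k l g b :: nat
  assumes k: "0 < k" and l: "0 < l" and c: "(g*b) mod l = 1 mod l"
  shows "even (k*l) \<Longrightarrow> even (int (k*g) - int (k*b))"
    and "4 dvd (k*l) \<Longrightarrow> 4 dvd (int (k*g) - int (k*b))"
    and "even (k*l) \<Longrightarrow> even (k*g + k)"
proof -
  have ldvd: "int l dvd int (g*b) - 1"
  proof -
    have "int (g*b) mod int l = 1 mod int l" using c by (metis of_nat_1 zmod_int)
    then show ?thesis by (simp add: mod_eq_dvd_iff)
  qed
  have diffeq: "int (k*g) - int (k*b) = int k * (int g - int b)" by (simp add: algebra_simps)
  have oddgb: "odd g \<and> odd b" if "even l"
  proof -
    have "2 dvd int l" using that by simp
    then have "2 dvd int (g*b) - 1" using ldvd dvd_trans by blast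
    then have "odd (int (g*b))" by simp
    then have "odd (g*b)" by simp
    then show ?thesis by simp
  qed
  show "even (k*l) \<Longrightarrow> even (int (k*g) - int (k*b))"
  proof -
    assume e: "even (k*l)"
    show ?thesis
    proof (cases "even k")
      case True
      then show ?thesis unfolding diffeq by simp
    next
      case False
      then have "even l" using e by simp
      then have "odd g" "odd b" using oddgb by auto
      then have "even (int g - int b)" by simp
      then show ?thesis unfolding diffeq by simp
    qed
  qed
  show "even (k*l) \<Longrightarrow> even (k*g + k)"
  proof -
    assume e: "even (k*l)"
    show ?thesis
    proof (cases "even k")
      case True
      then show ?thesis by simp
    next
      case False
      then have "even l" using e by simp
      then have "odd g" using oddgb by auto
      then show ?thesis using False by simp
    qed
  qed
  show "4 dvd (k*l) \<Longrightarrow> 4 dvd (int (k*g) - int (k*b))"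
  proof -
    assume e: "4 dvd (k*l)"
    show ?thesis
    proof (cases "even k")
      case True
      then obtain k' where k': "k = 2*k'" by blast
      show ?thesis
      proof (cases "even k'")
        case True
        then obtain k'' where "k' = 2*k''" by blast
        then have "int k = 4 * int k''" using k' by simp
        then show ?thesis unfolding diffeq by simp
      next
        case False
        have "4 dvd 2 * (k'*l)" using e k' by (simp add: mult.assoc)
        then have "2 dvd k'*l" by simp
        then have "even l" using False by simp
        then have "odd g" "odd b" using oddgb by auto
        then have "2 dvd (int g - int b)" by simp
        then obtain q where q: "int g - int b = 2*q" by blast
        have "int (k*g) - int (k*b) = 2 * int k' * (int g - int b)" unfolding diffeq k' by (simp add: algebra_simps)
        also have "\<dots> = 4 * (int k' * q)" unfolding q by simp
        finally have "int (k*g) - int (k*b) = 4 * (int k' * q)" .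
        then show ?thesis by simp
      qed
    next
      case False
      have cop: "coprime 4 k"
      proof -
        have c2: "coprime 2 k" using False by simp
        have "coprime (2*2) k" unfolding coprime_mult_left_iff using c2 by blast
        then show ?thesis by simp
      qed
      have "4 dvd l" using e coprime_dvd_mult_right_iff[OF cop] by simp
      then have "(4::int) dvd int l" by (metis of_nat_dvd_iff of_nat_numeral)
      then have d1: "4 dvd int g * int b - 1" using ldvd dvd_trans by (metis of_nat_mult)
      have "even l" using \<open>4 dvd l\<close> by (metis dvd_trans even_numeral)
      then have "odd g" using oddgb by auto
      then obtain q where q: "g = 2*q+1" by (metis oddE)
      have d2: "4 dvd int g * int g - 1"
      proof -
        have "int g * int g - 1 = 4 * (int q * int q + int q)" using q by (simp add: algebra_simps)
        then show ?thesis by simp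
      qed
      have "int g - int b = int b * (int g * int g - 1) - int g * (int g * int b - 1)"
        by (simp add: algebra_simps)
      moreover have "4 dvd int b * (int g * int g - 1) - int g * (int g * int b - 1)"
        using dvd_diff[OF dvd_mult[OF d2, of "int b"] dvd_mult[OF d1, of "int g"]] .
      ultimately have "4 dvd int g - int b" by simp
      then show ?thesis unfolding diffeq by simp
    qed
  qed
qed

lemma fpow_apply: "(f^^(m+n)) x = (f^^m) ((f^^n) x)"
  by (simp only: funpow_add o_apply)

lemma comm_pow1:
  assumes "x \<circ> y = y \<circ> x"
  shows "x ((y^^b) p) = (y^^b) (x p)"
proof (induction b)
  case (Suc b)
  have "x ((y^^Suc b) p) = x (y ((y^^b) p))" by simp
  also have "\<dots> = y (x ((y^^b) p))" using assms by (metis comp_apply)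
  also have "\<dots> = (y^^Suc b) (x p)" using Suc by simp
  finally show ?case .
qed simp

lemma comm_pow:
  assumes "x \<circ> y = y \<circ> x"
  shows "(x^^a) ((y^^b) p) = (y^^b) ((x^^a) p)"
proof (induction a)
  case (Suc a)
  have "(x^^Suc a) ((y^^b) p) = x ((x^^a) ((y^^b) p))" by simp
  also have "\<dots> = x ((y^^b) ((x^^a) p))" using Suc by simp
  also have "\<dots> = (y^^b) (x ((x^^a) p))" by (rule comm_pow1[OF assms])
  finally show ?case by simp
qed simp

lemma iter_rel:
  assumes comm: "x \<circ> y = y \<circ> x" and hk: "(y^^k) p = (x^^U) p"
  shows "(y^^(k*m)) p = (x^^(U*m)) p"
proof (induction m)
  case (Suc m)
  have "(y^^(k*Suc m)) p = (y^^k) ((y^^(k*m)) p)"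
    using fpow_apply[where f=y and m=k and n="k*m" and x=p] by simp
  also have "\<dots> = (y^^k) ((x^^(U*m)) p)" using Suc by simp
  also have "\<dots> = (x^^(U*m)) ((y^^k) p)" using comm_pow[OF comm[symmetric]] by simp
  also have "\<dots> = (x^^(U*m)) ((x^^U) p)" using hk by simp
  also have "\<dots> = (x^^(U*Suc m)) p"
    using fpow_apply[where f=x and m="U*m" and n=U and x=p] by (simp add: algebra_simps)
  finally show ?case .
qed simp

lemma half:
  fixes x y :: "nat \<Rightarrow> nat"
  assumes M: "0 < M"
    and hx: "\<And>a b. (x^^a) p = (x^^b) p \<longleftrightarrow> a mod M = b mod M"
    and hy: "\<And>a b. (y^^a) p = (y^^b) p \<longleftrightarrow> a mod M = b mod M"
    and comm: "x \<circ> y = y \<circ> x"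
    and k: "0 < k" and hk: "(y^^k) p = (x^^U) p"
    and hkd: "\<And>b. (\<exists>a. (y^^b) p = (x^^a) p) \<longleftrightarrow> k dvd b"
  shows "k dvd M" "k dvd U" "\<exists>b. (x^^k) p = (y^^b) p"
proof -
  have yM: "(y^^M) p = p" using hy[of M 0] by simp
  then have "(y^^M) p = (x^^0) p" by simp
  then show kM: "k dvd M" using hkd by blast
  then obtain l where l: "M = k*l" by blast
  have l0: "0 < l" using l M by simp
  have "(x^^(U*l)) p = (y^^(k*l)) p" using iter_rel[OF comm hk] by simp
  also have "\<dots> = (x^^0) p" using yM l by simp
  finally have "(U*l) mod M = 0" using hx[of "U*l" 0] by simp
  then have "k*l dvd U*l" using l by (simp add: dvd_eq_mod_eq_0)
  then show kU: "k dvd U" using l0 by simp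
  then obtain g where g: "U = k*g" by blast
  have cop: "gcd l g = 1"
  proof -
    define c where "c = gcd l g"
    have c0: "0 < c" using l0 c_def by simp
    have cl: "c dvd l" "c dvd g" using c_def by auto
    then obtain l' g' where l': "l = c*l'" and g': "g = c*g'" by blast
    have "(y^^(k*l')) p = (x^^(U*l')) p" using iter_rel[OF comm hk] by simp
    also have "U*l' = M*g'" using g l l' g' by simp
    also have "(x^^(M*g')) p = (x^^0) p" using hx[of "M*g'" 0] by simp
    finally have "(y^^(k*l')) p = (y^^0) p" by simp
    then have "(k*l') mod M = 0" using hy[of "k*l'" 0] by simp
    then have "k*l dvd k*l'" using l by (simp add: dvd_eq_mod_eq_0)
    then have "l dvd l'" using k by simp
    moreover have "0 < l'" using l' l0 by simp
    ultimately have "l \<le> l'" by (simp add: dvd_imp_le)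
    then have "c \<le> 1" using l' l0 by (metis mult_le_cancel2 mult_1 nat_mult_le_cancel_disj)
    then show ?thesis using c0 unfolding c_def by linarith
  qed
  obtain c' where c': "(g*c') mod l = 1 mod l"
  proof (cases "g = 0")
    case True
    then have "l = 1" using cop by simp
    then show ?thesis using that[of 0] by simp
  next
    case False
    obtain u v where "g*u = l*v + gcd g l" using bezout_nat[OF False] by blast
    then have "g*u = l*v + 1" using cop by (simp add: gcd.commute)
    then have "(g*u) mod l = (1 + l*v) mod l" by simp
    also have "(1 + l*v) mod l = 1 mod l" by (rule mod_mult_self2)
    finally have "(g*u) mod l = 1 mod l" .
    then show ?thesis using that by blast
  qed
  have "(y^^(k*c')) p = (x^^(U*c')) p" using iter_rel[OF comm hk] by simp
  also have "(x^^(U*c')) p = (x^^k) p"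
  proof -
    have "(U*c') mod M = (k*(g*c')) mod (k*l)" using g l by (simp add: mult.assoc)
    also have "\<dots> = k * ((g*c') mod l)" by (rule mod_mult_mult1)
    also have "\<dots> = k * (1 mod l)" using c' by simp
    also have "\<dots> = (k*1) mod (k*l)" by (rule mod_mult_mult1[symmetric])
    also have "\<dots> = k mod M" using l by simp
    finally show ?thesis using hx[of "U*c'" k] by simp
  qed
  finally show "\<exists>b. (x^^k) p = (y^^b) p" by metis
qed

lemma point_main:
  fixes x y :: "nat \<Rightarrow> nat"
  assumes M: "0 < M"
    and hx: "\<And>a b. (x^^a) p = (x^^b) p \<longleftrightarrow> a mod M = b mod M"
    and hy: "\<And>a b. (y^^a) p = (y^^b) p \<longleftrightarrow> a mod M = b mod M"
    and comm: "x \<circ> y = y \<circ> x"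
    and k: "0 < k" and hk: "(y^^k) p = (x^^U) p"
    and hkd: "\<And>b. (\<exists>a. (y^^b) p = (x^^a) p) \<longleftrightarrow> k dvd b"
    and k': "0 < k'" and hk': "(x^^k') p = (y^^U') p"
    and hkd': "\<And>a. (\<exists>b. (x^^a) p = (y^^b) p) \<longleftrightarrow> k' dvd a"
  shows "k' = k" "k dvd U" "k dvd U'"
    "even M \<Longrightarrow> even (int U - int U')"
    "4 dvd M \<Longrightarrow> 4 dvd (int U - int U')"
    "even M \<Longrightarrow> even (U + k)"
proof -
  note H1 = half[OF M hx hy comm k hk hkd]
  have "k' dvd k" using H1(3) hkd' by blast
  moreover have "k dvd k'"
  proof -
    have "\<exists>b. (y^^k') p = (x^^b) p"
      by (rule half(3)[OF M hy hx comm[symmetric] k' hk' hkd'])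
    then show ?thesis using hkd by blast
  qed
  ultimately show kk: "k' = k" by (simp add: dvd_antisym)
  show kU: "k dvd U" by (rule H1(2))
  have "(y^^U') p = (x^^k') p" using hk' by simp
  then show kU': "k dvd U'" using hkd by blast
  obtain l where l: "M = k*l" using H1(1) by blast
  have l0: "0 < l" using l M by simp
  obtain g where g: "U = k*g" using kU by blast
  obtain b where b: "U' = k*b" using kU' by blast
  have "(x^^k) p = (y^^(k*b)) p" using hk' kk b by simp
  also have "\<dots> = (x^^(U*b)) p" by (rule iter_rel[OF comm hk])
  finally have "k mod M = (U*b) mod M" using hx[of k "U*b"] by simp
  then have "k * (1 mod l) = k * ((g*b) mod l)"
    using l g mod_mult_mult1[of k 1 l] mod_mult_mult1[of k "g*b" l] by (simp add: mult.assoc)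
  then have c: "(g*b) mod l = 1 mod l" using k by simp
  note N = NT[OF k l0 c]
  show "even M \<Longrightarrow> even (int U - int U')" using N(1) l g b by simp
  show "4 dvd M \<Longrightarrow> 4 dvd (int U - int U')" using N(2) l g b by simp
  show "even M \<Longrightarrow> even (U + k)" using N(3) l g b by simp
qed

lemma mod_add_cancel_nat:
  fixes i a b M :: nat
  shows "(i + a) mod M = (i + b) mod M \<longleftrightarrow> a mod M = b mod M"
proof -
  have "(i + a) mod M = (i + b) mod M \<longleftrightarrow> int ((i + a) mod M) = int ((i + b) mod M)" by simp
  also have "\<dots> \<longleftrightarrow> (int i + int a) mod int M = (int i + int b) mod int M" by (simp add: zmod_int)
  also have "\<dots> \<longleftrightarrow> int M dvd (int i + int a) - (int i + int b)" by (rule mod_eq_dvd_iff)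
  also have "\<dots> \<longleftrightarrow> int M dvd int a - int b" by simp
  also have "\<dots> \<longleftrightarrow> int a mod int M = int b mod int M" by (rule mod_eq_dvd_iff[symmetric])
  also have "\<dots> \<longleftrightarrow> a mod M = b mod M" by (simp add: zmod_int[symmetric])
  finally show ?thesis .
qed

lemma conj_pow:
  assumes "f \<circ> u = v \<circ> f"
  shows "f ((u^^a) x) = (v^^a) (f x)"
proof (induction a)
  case (Suc a)
  have "f ((u^^Suc a) x) = f (u ((u^^a) x))" by simp
  also have "\<dots> = v (f ((u^^a) x))" using assms by (metis comp_apply)
  also have "\<dots> = (v^^Suc a) (f x)" using Suc by simp
  finally show ?case .
qed simp

lemma Ssum_one: "Ssum id (\<lambda>_. 1) b j = b"
  unfolding Ssum_def by simp

lemma pi_pow: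
  assumes "j \<in> {1..n}" "i < 2*r"
  shows "(piperm r n ^^ b) (pt r j i) = pt r j ((i + b) mod (2*r))"
  using cform_pow[OF pi_cform assms, of b] by (simp only: Ssum_one id_funpow id_apply)

lemma orbit_test:
  assumes cf: "cform r n y \<tau> a" and j: "j \<in> {1..n}" and i: "i < 2*r"
  shows "(\<exists>c. (y^^b) (pt r j i) = (piperm r n^^c) (pt r j i)) \<longleftrightarrow> (\<tau>^^b) j = j"
proof -
  have tp: "\<tau> permutes {1..n}" using cf by (simp add: cform_def)
  have jb: "(\<tau>^^b) j \<in> {1..n}" using funpow_in[OF tp j] .
  define X where "X = (i + Ssum \<tau> a b j) mod (2*r)"
  have X: "X < 2*r" using i unfolding X_def by simp
  have yb: "(y^^b) (pt r j i) = pt r ((\<tau>^^b) j) X" unfolding X_def by (rule cform_pow[OF cf j i])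
  show ?thesis
  proof
    assume "\<exists>c. (y^^b) (pt r j i) = (piperm r n^^c) (pt r j i)"
    then obtain c where "pt r ((\<tau>^^b) j) X = pt r j ((i + c) mod (2*r))" using yb pi_pow[OF j i] by auto
    then show "(\<tau>^^b) j = j" using pt_inj[of "(\<tau>^^b) j" j X r "(i + c) mod (2*r)"] jb j X i by auto
  next
    assume h: "(\<tau>^^b) j = j"
    have "(i + (X + 2*r - i)) mod (2*r) = X" using X i by simp
    then have "(piperm r n^^(X + 2*r - i)) (pt r j i) = pt r j X" using pi_pow[OF j i] by simp
    then show "\<exists>c. (y^^b) (pt r j i) = (piperm r n^^c) (pt r j i)" using yb h by metis
  qed
qed

lemma blk_pt:
  assumes "1 \<le> j" "i < 2*r"
  shows "(pt r j i - 1) div (2*r) + 1 = j"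
proof -
  obtain b where b: "j = Suc b" using assms by (cases j) auto
  have "pt r j i - 1 = i + 2*r*b" using b by (simp add: pt_def)
  then show ?thesis using assms b by simp
qed

lemma sum_blocks:
  fixes f :: "nat \<Rightarrow> 'a::comm_monoid_add"
  assumes r: "0 < r"
  shows "(\<Sum>p\<in>{1..2*r*n}. f p) = (\<Sum>j\<in>{1..n}. \<Sum>i<2*r. f (pt r j i))"
proof -
  have inj: "inj_on (\<lambda>(j,i). pt r j i) ({1..n} \<times> {..<2*r})"
    by (auto simp: inj_on_def pt_inj)
  have img: "(\<lambda>(j,i). pt r j i) ` ({1..n} \<times> {..<2*r}) = {1..2*r*n}"
  proof
    show "(\<lambda>(j,i). pt r j i) ` ({1..n} \<times> {..<2*r}) \<subseteq> {1..2*r*n}"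
      using pt_range by auto
    show "{1..2*r*n} \<subseteq> (\<lambda>(j,i). pt r j i) ` ({1..n} \<times> {..<2*r})"
    proof
      fix p assume p: "p \<in> {1..2*r*n}"
      obtain j i where "1 \<le> j" "j \<le> n" "i < 2*r" "p = pt r j i" using pt_cases[OF p r] by blast
      then show "p \<in> (\<lambda>(j,i). pt r j i) ` ({1..n} \<times> {..<2*r})" by force
    qed
  qed
  have "(\<Sum>p\<in>{1..2*r*n}. f p) = (\<Sum>x\<in>{1..n} \<times> {..<2*r}. f ((\<lambda>(j,i). pt r j i) x))"
    using sum.reindex[OF inj, of f] img by simp
  also have "\<dots> = (\<Sum>j\<in>{1..n}. \<Sum>i<2*r. f (pt r j i))"
    by (simp add: sum.cartesian_product split_def)
  finally show ?thesis .
qed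

lemma sum_blocks_blk:
  fixes f :: "nat \<Rightarrow> 'a::comm_semiring_1"
  assumes r: "0 < r"
  shows "(\<Sum>p\<in>{1..2*r*n}. f ((p - 1) div (2*r) + 1)) = of_nat (2*r) * (\<Sum>j\<in>{1..n}. f j)"
proof -
  have "(\<Sum>p\<in>{1..2*r*n}. f ((p - 1) div (2*r) + 1)) = (\<Sum>j\<in>{1..n}. \<Sum>i<2*r. f ((pt r j i - 1) div (2*r) + 1))"
    by (rule sum_blocks[OF r])
  also have "\<dots> = (\<Sum>j\<in>{1..n}. \<Sum>i<2*r. f j)"
  proof (intro sum.cong refl)
    fix j i assume "j \<in> {1..n}" "i \<in> {..<2*r}"
    then have "(pt r j i - 1) div (2*r) + 1 = j" using blk_pt[of j i r] by simp
    then show "f ((pt r j i - 1) div (2*r) + 1) = f j" by simp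
  qed
  also have "\<dots> = of_nat (2*r) * (\<Sum>j\<in>{1..n}. f j)"
    by (simp add: sum_distrib_left)
  finally show ?thesis .
qed

lemma sum_gamma:
  assumes tp: "\<tau> permutes {1..n}"
    and dv: "\<forall>j\<in>{1..n}. per \<tau> j dvd Ssum \<tau> a (per \<tau> j) j"
  shows "(\<Sum>j\<in>{1..n}. a j) = (\<Sum>j\<in>{1..n}. Ssum \<tau> a (per \<tau> j) j div per \<tau> j)"
proof -
  obtain N where N: "0 < N" "\<tau>^^N = id" using perm_nilp[OF tp] by blast
  have each: "Ssum \<tau> a N j = N * (Ssum \<tau> a (per \<tau> j) j div per \<tau> j)" if j: "j \<in> {1..n}" for j
  proof -
    have "(\<tau>^^N) j = j" using N by simp
    then have "per \<tau> j dvd N" using per_perm(3)[OF tp] by blast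
    then obtain m where m: "N = m * per \<tau> j" by (auto simp: dvd_def mult.commute)
    obtain c where c: "Ssum \<tau> a (per \<tau> j) j = per \<tau> j * c" using dv j by blast
    have pp: "per \<tau> j > 0" using per_perm(1)[OF tp] .
    have "Ssum \<tau> a N j = m * Ssum \<tau> a (per \<tau> j) j"
      unfolding m by (rule Ssum_mult[OF per_perm(2)[OF tp]])
    also have "\<dots> = N * c" using m c by simp
    also have "c = Ssum \<tau> a (per \<tau> j) j div per \<tau> j" using c pp by simp
    finally show ?thesis .
  qed
  have "(\<Sum>j\<in>{1..n}. Ssum \<tau> a N j) = (\<Sum>l\<in>{1..N}. \<Sum>j\<in>{1..n}. a ((\<tau>^^l) j))"
    unfolding Ssum_def by (rule sum.swap)
  also have "\<dots> = (\<Sum>l\<in>{1..N}. \<Sum>j\<in>{1..n}. a j)"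
  proof -
    have inner: "(\<Sum>j\<in>{1..n}. a ((\<tau>^^l) j)) = (\<Sum>j\<in>{1..n}. a j)" for l
    proof -
      have "(\<Sum>j\<in>{1..n}. a j) = (\<Sum>j\<in>{1..n}. (a \<circ> (\<tau>^^l)) j)"
        by (rule sum.permute[OF funpow_permutes[OF tp]])
      then show ?thesis by simp
    qed
    show ?thesis by (simp only: inner)
  qed
  also have "\<dots> = N * (\<Sum>j\<in>{1..n}. a j)" by simp
  finally have e1: "(\<Sum>j\<in>{1..n}. Ssum \<tau> a N j) = N * (\<Sum>j\<in>{1..n}. a j)" .
  have "(\<Sum>j\<in>{1..n}. Ssum \<tau> a N j) = N * (\<Sum>j\<in>{1..n}. Ssum \<tau> a (per \<tau> j) j div per \<tau> j)"
    using each by (simp add: sum_distrib_left)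
  then show ?thesis using e1 N(1) by simp
qed

lemma orb_inS:
  assumes "\<tau> ` S \<subseteq> S" "j0 \<in> S"
  shows "(\<tau>^^l) j0 \<in> S"
proof (induction l)
  case 0 then show ?case using assms(2) by simp
next
  case (Suc l)
  have "\<tau> ((\<tau>^^l) j0) \<in> \<tau> ` S" using Suc by (rule imageI)
  then show ?case using assms(1) by auto
qed

lemma orb_hconst:
  assumes "\<tau> ` S \<subseteq> S" "j0 \<in> S" "\<forall>j\<in>S. h (\<tau> j) = h j"
  shows "h ((\<tau>^^l) j0) = h j0"
proof (induction l)
  case 0 then show ?case by simp
next
  case (Suc l)
  have "(\<tau>^^l) j0 \<in> S" by (rule orb_inS[OF assms(1,2)])
  then have "h (\<tau> ((\<tau>^^l) j0)) = h ((\<tau>^^l) j0)" using assms(3) by blast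
  then show ?case using Suc by simp
qed

lemma orb_inj:
  fixes \<tau> :: "nat \<Rightarrow> nat"
  assumes "inj \<tau>"
  shows "inj_on (\<lambda>l. (\<tau>^^l) j0) {..<per \<tau> j0}"
proof (rule inj_onI)
  fix a b assume a: "a \<in> {..<per \<tau> j0}" and b: "b \<in> {..<per \<tau> j0}" and e: "(\<tau>^^a) j0 = (\<tau>^^b) j0"
  have key: "False" if "x < y" "y < per \<tau> j0" "(\<tau>^^x) j0 = (\<tau>^^y) j0" for x y
  proof -
    have "(\<tau>^^y) j0 = (\<tau>^^x) ((\<tau>^^(y-x)) j0)"
      using fpow_apply[where f=\<tau> and m=x and n="y-x" and x=j0] that(1) by simp
    then have "(\<tau>^^x) ((\<tau>^^(y-x)) j0) = (\<tau>^^x) j0" using that(3) by simp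
    then have "(\<tau>^^(y-x)) j0 = j0" using inj_fn[OF assms(1), of x] by (simp add: inj_eq)
    then have "per \<tau> j0 \<le> y - x" by (rule per_least[rotated]) (use that(1) in simp)
    then show False using that(2) by simp
  qed
  show "a = b"
  proof (rule ccontr)
    assume "a \<noteq> b"
    then consider "a < b" | "b < a" by linarith
    then show False
    proof cases
      case 1 then show False using key[of a b] b e by simp
    next
      case 2 then show False using key[of b a] a e by simp
    qed
  qed
qed

lemma orb_closed:
  fixes \<tau> :: "nat \<Rightarrow> nat"
  assumes inj: "inj \<tau>" and cl: "\<tau> ` S \<subseteq> S" and q0: "0 < per \<tau> j0" and qf: "(\<tau>^^(per \<tau> j0)) j0 = j0"
  shows "\<tau> ` (S - (\<lambda>l. (\<tau>^^l) j0) ` {..<per \<tau> j0}) \<subseteq> S - (\<lambda>l. (\<tau>^^l) j0) ` {..<per \<tau> j0}"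
proof
  define q where "q = per \<tau> j0"
  define Orb where "Orb = (\<lambda>l. (\<tau>^^l) j0) ` {..<q}"
  fix z assume "z \<in> \<tau> ` (S - (\<lambda>l. (\<tau>^^l) j0) ` {..<per \<tau> j0})"
  then obtain x where x: "x \<in> S" "x \<notin> Orb" "z = \<tau> x" unfolding Orb_def q_def by blast
  have "z \<in> S" using x cl by auto
  moreover have "z \<notin> Orb"
  proof
    assume "z \<in> Orb"
    then obtain l where l0: "l \<in> {..<q}" "z = (\<tau>^^l) j0" unfolding Orb_def by (rule imageE)
    then have l: "l < q" "\<tau> x = (\<tau>^^l) j0" using x(3) by auto
    have "x \<in> Orb"
    proof (cases l)
      case 0
      have "\<tau> x = (\<tau>^^q) j0" using l 0 qf q_def by simp
      also have "q = Suc (q - 1)" using q0 q_def by simp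
      also have "(\<tau>^^Suc (q - 1)) j0 = \<tau> ((\<tau>^^(q-1)) j0)" by simp
      finally have "x = (\<tau>^^(q-1)) j0" using inj by (simp add: inj_eq)
      moreover have "q - 1 \<in> {..<q}" using q0 q_def by simp
      ultimately show ?thesis unfolding Orb_def by (rule image_eqI)
    next
      case (Suc l')
      have "\<tau> x = \<tau> ((\<tau>^^l') j0)" using l Suc by simp
      then have "x = (\<tau>^^l') j0" using inj by (simp add: inj_eq)
      moreover have "l' \<in> {..<q}" using l Suc by simp
      ultimately show ?thesis unfolding Orb_def by (rule image_eqI)
    qed
    then show False using x by simp
  qed
  ultimately show "z \<in> S - (\<lambda>l. (\<tau>^^l) j0) ` {..<per \<tau> j0}" unfolding Orb_def q_def by simp
qed

lemma orbit_sum_dvd: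
  fixes \<tau> :: "nat \<Rightarrow> nat" and h :: "nat \<Rightarrow> int"
  assumes "inj \<tau>" "finite S" "\<tau> ` S \<subseteq> S"
    "\<forall>j\<in>S. 0 < per \<tau> j \<and> (\<tau>^^(per \<tau> j)) j = j"
    "\<forall>j\<in>S. h (\<tau> j) = h j" "\<forall>j\<in>S. m dvd int (per \<tau> j) * h j"
  shows "m dvd (\<Sum>j\<in>S. h j)"
  using assms(2-)
proof (induction "card S" arbitrary: S rule: less_induct)
  case less
  show ?case
  proof (cases "S = {}")
    case True
    then show ?thesis by simp
  next
    case False
    then obtain j0 where j0: "j0 \<in> S" by blast
    define q where "q = per \<tau> j0"
    have pj: "0 < per \<tau> j0 \<and> (\<tau>^^(per \<tau> j0)) j0 = j0" using less.prems(3) j0 by blast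
    then have q0: "0 < q" and qf: "(\<tau>^^q) j0 = j0" unfolding q_def by auto
    define Orb where "Orb = (\<lambda>l. (\<tau>^^l) j0) ` {..<q}"
    have OS: "Orb \<subseteq> S" unfolding Orb_def using orb_inS[OF less.prems(2) j0] by blast
    have sumO: "(\<Sum>x\<in>Orb. h x) = int q * h j0"
    proof -
      have "(\<Sum>x\<in>Orb. h x) = (\<Sum>l<q. h ((\<tau>^^l) j0))"
        unfolding Orb_def q_def by (rule sum.reindex_cong[OF orb_inj[OF assms(1)] refl refl])
      also have "\<dots> = (\<Sum>l<q. h j0)"
        by (rule sum.cong[OF refl], rule orb_hconst[OF less.prems(2) j0 less.prems(4)])
      also have "\<dots> = int q * h j0" by simp
      finally show ?thesis .
    qed
    have closed: "\<tau> ` (S - Orb) \<subseteq> S - Orb"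
      unfolding Orb_def q_def using orb_closed[OF assms(1) less.prems(2)] pj by blast
    have j0O: "j0 \<in> Orb" unfolding Orb_def using q0 by (intro image_eqI[of _ _ 0]) auto
    have "S - Orb \<subset> S" using j0O j0 by blast
    then have card_lt: "card (S - Orb) < card S" by (rule psubset_card_mono[OF less.prems(1)])
    have f1: "finite (S - Orb)" using less.prems(1) by simp
    have p3: "\<forall>j\<in>S - Orb. 0 < per \<tau> j \<and> (\<tau>^^(per \<tau> j)) j = j" using less.prems(3) by blast
    have p4: "\<forall>j\<in>S - Orb. h (\<tau> j) = h j" using less.prems(4) by blast
    have p5: "\<forall>j\<in>S - Orb. m dvd int (per \<tau> j) * h j" using less.prems(5) by blast
    have IH: "m dvd (\<Sum>j\<in>S - Orb. h j)"
      by (rule less.hyps[OF card_lt f1 closed p3 p4 p5])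
    have "(\<Sum>j\<in>S. h j) = (\<Sum>j\<in>Orb. h j) + (\<Sum>j\<in>S - Orb. h j)"
      using sum.subset_diff[OF OS less.prems(1), of h] by (simp add: add.commute)
    moreover have "m dvd (\<Sum>j\<in>Orb. h j)"
    proof -
      have "m dvd int q * h j0" using less.prems(5) j0 q_def by blast
      then show ?thesis using sumO by simp
    qed
    ultimately show ?thesis using IH by simp
  qed
qed

lemma pi_eq:
  assumes "j \<in> {1..n}" "i < 2*r"
  shows "(piperm r n^^a) (pt r j i) = (piperm r n^^b) (pt r j i) \<longleftrightarrow> a mod (2*r) = b mod (2*r)"
proof -
  have "(piperm r n^^a) (pt r j i) = (piperm r n^^b) (pt r j i) \<longleftrightarrow>
        pt r j ((i + a) mod (2*r)) = pt r j ((i + b) mod (2*r))"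
    using pi_pow[OF assms] by simp
  also have "\<dots> \<longleftrightarrow> (i + a) mod (2*r) = (i + b) mod (2*r)"
    using pt_inj[of j j "(i + a) mod (2*r)" r "(i + b) mod (2*r)"] assms by auto
  also have "\<dots> \<longleftrightarrow> a mod (2*r) = b mod (2*r)" by (rule mod_add_cancel_nat)
  finally show ?thesis .
qed

lemma cform_P:
  assumes cf: "cform r n y \<tau> a" and x: "x \<in> {1..2*r*n}" and r: "0 < r"
  shows "y x \<in> {1..2*r*n}" "(y x - 1) div (2*r) + 1 = \<tau> ((x - 1) div (2*r) + 1)"
proof -
  obtain j i where ji: "1 \<le> j" "j \<le> n" "i < 2*r" "x = pt r j i" using pt_cases[OF x r] by blast
  have tp: "\<tau> permutes {1..n}" using cf by (simp add: cform_def)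
  have tj: "\<tau> j \<in> {1..n}" using permutes_in_image[OF tp] ji by auto
  have yx: "y x = pt r (\<tau> j) ((i + a (\<tau> j)) mod (2*r))"
    using cf ji unfolding cform_def by auto
  have m: "(i + a (\<tau> j)) mod (2*r) < 2*r" using ji by simp
  show "y x \<in> {1..2*r*n}" using yx pt_range[of "\<tau> j" n _ r] tj m by auto
  show "(y x - 1) div (2*r) + 1 = \<tau> ((x - 1) div (2*r) + 1)"
    using yx blk_pt[of "\<tau> j" _ r] blk_pt[of j i r] ji tj m by auto
qed

lemma gamma_shift:
  assumes tp: "\<tau> permutes {1..n}"
  shows "Ssum \<tau> a (per \<tau> (\<tau> j)) (\<tau> j) div per \<tau> (\<tau> j) = Ssum \<tau> a (per \<tau> j) j div per \<tau> j"
  using per_step[OF tp] Ssum_shift[OF per_perm(2)[OF tp]] by simp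

lemma pp:
  fixes t g s :: "nat \<Rightarrow> nat"
  assumes r: "0 < r"
    and cft: "cform r n t \<tau>t d" and cfs: "cform r n s \<tau>s e"
    and gp: "g permutes {1..2*r*n}"
    and P1: "\<And>a x. g ((piperm r n^^a) x) = (t^^a) (g x)"
    and P2: "\<And>a x. g ((s^^a) x) = (piperm r n^^a) (g x)"
    and comm: "piperm r n \<circ> t = t \<circ> piperm r n"
    and p: "p \<in> {1..2*r*n}"
  defines "j \<equiv> (p - 1) div (2*r) + 1" and "j2 \<equiv> (inv g p - 1) div (2*r) + 1"
  shows "per \<tau>s j2 = per \<tau>t j"
    "per \<tau>t j dvd Ssum \<tau>t d (per \<tau>t j) j"
    "per \<tau>t j dvd Ssum \<tau>s e (per \<tau>s j2) j2"
    "even (int (Ssum \<tau>t d (per \<tau>t j) j) - int (Ssum \<tau>s e (per \<tau>s j2) j2))"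
    "4 dvd 2*r \<Longrightarrow> 4 dvd (int (Ssum \<tau>t d (per \<tau>t j) j) - int (Ssum \<tau>s e (per \<tau>s j2) j2))"
    "even (Ssum \<tau>t d (per \<tau>t j) j + per \<tau>t j)"
proof -
  let ?pi = "piperm r n"
  have tpt: "\<tau>t permutes {1..n}" using cft by (simp add: cform_def)
  have tps: "\<tau>s permutes {1..n}" using cfs by (simp add: cform_def)
  obtain j' i where ji: "1 \<le> j'" "j' \<le> n" "i < 2*r" "p = pt r j' i" using pt_cases[OF p r] by blast
  have jj: "j = j'" unfolding j_def using ji blk_pt by simp
  have jn: "j \<in> {1..n}" using ji jj by simp
  have pji: "p = pt r j i" using ji jj by simp
  define q where "q = inv g p"
  have qP: "q \<in> {1..2*r*n}" unfolding q_def using permutes_in_image[OF permutes_inv[OF gp]] p by blast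
  have gq: "g q = p" unfolding q_def using permutes_inverses(1)[OF gp] by simp
  obtain j2' i2 where ji2: "1 \<le> j2'" "j2' \<le> n" "i2 < 2*r" "q = pt r j2' i2" using pt_cases[OF qP r] by blast
  have jj2: "j2 = j2'" unfolding j2_def q_def[symmetric] using ji2 blk_pt by simp
  have j2n: "j2 \<in> {1..n}" using ji2 jj2 by simp
  have qji: "q = pt r j2 i2" using ji2 jj2 by simp
  have ginj: "inj g" using gp by (rule permutes_inj)
  define k where "k = per \<tau>t j"
  define U where "U = Ssum \<tau>t d k j"
  define k' where "k' = per \<tau>s j2"
  define U' where "U' = Ssum \<tau>s e k' j2"
  have M: "0 < 2*r" using r by simp
  have hx: "\<And>a b. (?pi^^a) p = (?pi^^b) p \<longleftrightarrow> a mod (2*r) = b mod (2*r)"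
    unfolding pji by (rule pi_eq[OF jn ji(3)])
  have hy: "\<And>a b. (t^^a) p = (t^^b) p \<longleftrightarrow> a mod (2*r) = b mod (2*r)"
  proof -
    fix a b
    have "(t^^a) p = g ((?pi^^a) q)" using P1 gq by simp
    moreover have "(t^^b) p = g ((?pi^^b) q)" using P1 gq by simp
    ultimately have "(t^^a) p = (t^^b) p \<longleftrightarrow> (?pi^^a) q = (?pi^^b) q" using ginj by (simp add: inj_eq)
    also have "\<dots> \<longleftrightarrow> a mod (2*r) = b mod (2*r)" unfolding qji by (rule pi_eq[OF j2n ji2(3)])
    finally show "(t^^a) p = (t^^b) p \<longleftrightarrow> a mod (2*r) = b mod (2*r)" .
  qed
  have k0: "0 < k" unfolding k_def by (rule per_perm(1)[OF tpt])
  have hk: "(t^^k) p = (?pi^^U) p"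
  proof -
    have "(t^^k) p = pt r ((\<tau>t^^k) j) ((i + U) mod (2*r))"
      unfolding pji U_def by (rule cform_pow[OF cft jn ji(3)])
    also have "(\<tau>t^^k) j = j" unfolding k_def by (rule per_perm(2)[OF tpt])
    also have "pt r j ((i + U) mod (2*r)) = (?pi^^U) p" unfolding pji by (rule pi_pow[OF jn ji(3), symmetric])
    finally show ?thesis .
  qed
  have hkd: "\<And>b. (\<exists>a. (t^^b) p = (?pi^^a) p) \<longleftrightarrow> k dvd b"
  proof -
    fix b
    have "(\<exists>a. (t^^b) p = (?pi^^a) p) \<longleftrightarrow> (\<tau>t^^b) j = j" unfolding pji by (rule orbit_test[OF cft jn ji(3)])
    also have "\<dots> \<longleftrightarrow> k dvd b" unfolding k_def by (rule per_perm(3)[OF tpt])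
    finally show "(\<exists>a. (t^^b) p = (?pi^^a) p) \<longleftrightarrow> k dvd b" .
  qed
  have k'0: "0 < k'" unfolding k'_def by (rule per_perm(1)[OF tps])
  have hk': "(?pi^^k') p = (t^^U') p"
  proof -
    have "(s^^k') q = pt r ((\<tau>s^^k') j2) ((i2 + U') mod (2*r))"
      unfolding qji U'_def by (rule cform_pow[OF cfs j2n ji2(3)])
    also have "(\<tau>s^^k') j2 = j2" unfolding k'_def by (rule per_perm(2)[OF tps])
    also have "pt r j2 ((i2 + U') mod (2*r)) = (?pi^^U') q" unfolding qji by (rule pi_pow[OF j2n ji2(3), symmetric])
    finally have "(s^^k') q = (?pi^^U') q" .
    then have "g ((s^^k') q) = g ((?pi^^U') q)" by simp
    then show ?thesis using P1 P2 gq by simp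
  qed
  have hkd': "\<And>a. (\<exists>b. (?pi^^a) p = (t^^b) p) \<longleftrightarrow> k' dvd a"
  proof -
    fix a
    have e1: "(?pi^^a) p = g ((s^^a) q)" using P2 gq by simp
    have e2: "\<And>b. (t^^b) p = g ((?pi^^b) q)" using P1 gq by simp
    have "(\<exists>b. (?pi^^a) p = (t^^b) p) \<longleftrightarrow> (\<exists>b. (s^^a) q = (?pi^^b) q)"
      using e1 e2 ginj by (simp add: inj_eq)
    also have "\<dots> \<longleftrightarrow> (\<tau>s^^a) j2 = j2" unfolding qji by (rule orbit_test[OF cfs j2n ji2(3)])
    also have "\<dots> \<longleftrightarrow> k' dvd a" unfolding k'_def by (rule per_perm(3)[OF tps])
    finally show "(\<exists>b. (?pi^^a) p = (t^^b) p) \<longleftrightarrow> k' dvd a" .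
  qed
  note PM = point_main[OF M hx hy comm k0 hk hkd k'0 hk' hkd']
  show "per \<tau>s j2 = per \<tau>t j" using PM(1) k_def k'_def by simp
  show "per \<tau>t j dvd Ssum \<tau>t d (per \<tau>t j) j" using PM(2) k_def U_def by simp
  show "per \<tau>t j dvd Ssum \<tau>s e (per \<tau>s j2) j2" using PM(3) k_def U'_def k'_def by simp
  show "even (int (Ssum \<tau>t d (per \<tau>t j) j) - int (Ssum \<tau>s e (per \<tau>s j2) j2))"
    using PM(4) k_def U_def U'_def k'_def by simp
  show "4 dvd 2*r \<Longrightarrow> 4 dvd (int (Ssum \<tau>t d (per \<tau>t j) j) - int (Ssum \<tau>s e (per \<tau>s j2) j2))"
    using PM(5) k_def U_def U'_def k'_def by simp
  show "even (Ssum \<tau>t d (per \<tau>t j) j + per \<tau>t j)"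
    using PM(6) k_def U_def by simp
qed

theorem lemma2p18:
  fixes r n :: nat and t g B B' :: "nat \<Rightarrow> nat" and d e :: "nat \<Rightarrow> nat"
  assumes "r \<ge> 2" and "n \<ge> 2"
    and "g permutes {1..2*r*n}"
    and "t = g \<circ> piperm r n \<circ> inv g"
    and "t \<circ> piperm r n = piperm r n \<circ> t"
    and "\<forall>j\<in>{1..n}. d j \<le> 2*r - 1" and "\<forall>j\<in>{1..n}. e j \<le> 2*r - 1"
    and "B \<in> Bgroup r n" and "B' \<in> Bgroup r n"
    and "t = Apow_prod r n d \<circ> B"
    and "inv g \<circ> piperm r n \<circ> g = Apow_prod r n e \<circ> B'"
  shows "(odd n \<longrightarrow> even (\<Sum>j=1..n. e j + d j))
       \<and> (even r \<and> even n \<longrightarrow> (\<Sum>j=1..n. e j + d j) mod 4 = 0)"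
proof -
  have r: "0 < r" using assms(1) by simp
  let ?P = "{1..2*r*n}"
  let ?pi = "piperm r n"
  define s where "s = inv g \<circ> ?pi \<circ> g"
  note gp = assms(3)
  have gi1: "\<And>x. g (inv g x) = x" using permutes_inverses(1)[OF gp] .
  have gi2: "\<And>x. inv g (g x) = x" using permutes_inverses(2)[OF gp] .
  have igp: "inv g permutes ?P" by (rule permutes_inv[OF gp])
  have comm: "?pi \<circ> t = t \<circ> ?pi" using assms(5) by simp
  obtain \<tau>t where cft: "cform r n t \<tau>t d" using cent_cform[OF assms(8), of d] assms(10) by auto
  obtain \<tau>s where cfs: "cform r n s \<tau>s e" using cent_cform[OF assms(9), of e] assms(11) s_def by auto
  have tpt: "\<tau>t permutes {1..n}" using cft by (simp add: cform_def)
  have tps: "\<tau>s permutes {1..n}" using cfs by (simp add: cform_def)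
  have R1: "g \<circ> ?pi = t \<circ> g" by (rule ext) (simp add: assms(4) gi2)
  have R2: "g \<circ> s = ?pi \<circ> g" by (rule ext) (simp add: s_def gi1)
  have R3: "inv g \<circ> t = ?pi \<circ> inv g" by (rule ext) (simp add: assms(4) gi2)
  have R4: "inv g \<circ> ?pi = s \<circ> inv g" by (rule ext) (simp add: s_def gi1)
  have P1: "\<And>a x. g ((?pi^^a) x) = (t^^a) (g x)" by (rule conj_pow[OF R1])
  have P2: "\<And>a x. g ((s^^a) x) = (?pi^^a) (g x)" by (rule conj_pow[OF R2])
  define blk where "blk p = (p - 1) div (2*r) + 1" for p
  define gt where "gt j = Ssum \<tau>t d (per \<tau>t j) j div per \<tau>t j" for j
  define gs where "gs j = Ssum \<tau>s e (per \<tau>s j) j div per \<tau>s j" for j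
  define H where "H p = int (gt (blk p)) - int (gs (blk (inv g p)))" for p
  note PP = pp[OF r cft cfs gp P1 P2 comm]
  have blkpt: "blk (pt r j i) = j" if "1 \<le> j" "i < 2*r" for j i
    unfolding blk_def using blk_pt[OF that] .
  have dvt: "\<forall>j\<in>{1..n}. per \<tau>t j dvd Ssum \<tau>t d (per \<tau>t j) j"
  proof
    fix j assume j: "j \<in> {1..n}"
    have pP: "pt r j 0 \<in> ?P" using pt_range[of j n 0 r] j r by auto
    show "per \<tau>t j dvd Ssum \<tau>t d (per \<tau>t j) j"
      using PP(2)[OF pP] blkpt[of j 0] j r unfolding blk_def by simp
  qed
  have dvs: "\<forall>j\<in>{1..n}. per \<tau>s j dvd Ssum \<tau>s e (per \<tau>s j) j"
  proof
    fix j assume j: "j \<in> {1..n}"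
    have qP: "pt r j 0 \<in> ?P" using pt_range[of j n 0 r] j r by auto
    have pP: "g (pt r j 0) \<in> ?P" using permutes_in_image[OF gp] qP by blast
    have bq: "blk (inv g (g (pt r j 0))) = j" using gi2 blkpt[of j 0] j r by simp
    show "per \<tau>s j dvd Ssum \<tau>s e (per \<tau>s j) j"
      using PP(1)[OF pP] PP(3)[OF pP] bq unfolding blk_def by simp
  qed
  have Sd: "(\<Sum>j\<in>{1..n}. d j) = (\<Sum>j\<in>{1..n}. gt j)"
    unfolding gt_def by (rule sum_gamma[OF tpt dvt])
  have Se: "(\<Sum>j\<in>{1..n}. e j) = (\<Sum>j\<in>{1..n}. gs j)"
    unfolding gs_def by (rule sum_gamma[OF tps dvs])
  have SH1: "(\<Sum>p\<in>?P. H p) = int (2*r) * (int (\<Sum>j\<in>{1..n}. d j) - int (\<Sum>j\<in>{1..n}. e j))"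
  proof -
    have a1: "(\<Sum>p\<in>?P. int (gt (blk p))) = int (2*r) * (\<Sum>j\<in>{1..n}. int (gt j))"
      unfolding blk_def using sum_blocks_blk[OF r, of "\<lambda>j. int (gt j)" n] by simp
    have "(\<Sum>p\<in>?P. int (gs (blk (inv g p)))) = (\<Sum>p\<in>?P. int (gs (blk p)))"
      using sum.permute[OF igp, of "\<lambda>p. int (gs (blk p))"] by (simp add: comp_def)
    also have "\<dots> = int (2*r) * (\<Sum>j\<in>{1..n}. int (gs j))"
      unfolding blk_def using sum_blocks_blk[OF r, of "\<lambda>j. int (gs j)" n] by simp
    finally have a2: "(\<Sum>p\<in>?P. int (gs (blk (inv g p)))) = int (2*r) * (\<Sum>j\<in>{1..n}. int (gs j))" .
    have "(\<Sum>p\<in>?P. H p) = (\<Sum>p\<in>?P. int (gt (blk p))) - (\<Sum>p\<in>?P. int (gs (blk (inv g p))))"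
      unfolding H_def by (rule sum_subtractf)
    also have "\<dots> = int (2*r) * ((\<Sum>j\<in>{1..n}. int (gt j)) - (\<Sum>j\<in>{1..n}. int (gs j)))"
      using a1 a2 by (simp add: right_diff_distrib)
    also have "(\<Sum>j\<in>{1..n}. int (gt j)) = int (\<Sum>j\<in>{1..n}. d j)" using Sd by simp
    also have "(\<Sum>j\<in>{1..n}. int (gs j)) = int (\<Sum>j\<in>{1..n}. e j)" using Se by simp
    finally show ?thesis .
  qed
  have gtinv: "gt (\<tau>t j) = gt j" for j unfolding gt_def by (rule gamma_shift[OF tpt])
  have gsinv: "gs (\<tau>s j) = gs j" for j unfolding gs_def by (rule gamma_shift[OF tps])
  have Hpi: "H (?pi x) = H x" if x: "x \<in> ?P" for x
  proof -
    have cfp: "cform r n ?pi id (\<lambda>_. 1)" by (rule pi_cform)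
    have b1: "blk (?pi x) = blk x" using cform_P(2)[OF cfp x r] unfolding blk_def by simp
    have ix: "inv g x \<in> ?P" using permutes_in_image[OF igp] x by blast
    have "inv g (?pi x) = s (inv g x)" using R4 by (metis comp_apply)
    then have b2: "blk (inv g (?pi x)) = \<tau>s (blk (inv g x))" using cform_P(2)[OF cfs ix r] unfolding blk_def by simp
    show ?thesis unfolding H_def b1 b2 gsinv ..
  qed
  have Ht: "H (t x) = H x" if x: "x \<in> ?P" for x
  proof -
    have cfp: "cform r n ?pi id (\<lambda>_. 1)" by (rule pi_cform)
    have b1: "blk (t x) = \<tau>t (blk x)" using cform_P(2)[OF cft x r] unfolding blk_def by simp
    have ix: "inv g x \<in> ?P" using permutes_in_image[OF igp] x by blast
    have "inv g (t x) = ?pi (inv g x)" using R3 by (metis comp_apply)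
    then have b2: "blk (inv g (t x)) = blk (inv g x)" using cform_P(2)[OF cfp ix r] unfolding blk_def by simp
    show ?thesis unfolding H_def b1 b2 gtinv ..
  qed
  have Hpow: "H ((?pi^^c) x) = H x" if x: "x \<in> ?P" for x c
  proof (induction c)
    case (Suc c)
    have "(?pi^^c) x \<in> ?P"
    proof (induction c)
      case (Suc c)
      then show ?case using cform_P(1)[OF pi_cform _ r] by simp
    qed (use x in simp)
    then show ?case using Hpi Suc by simp
  qed simp
  define hb where "hb j = H (pt r j 0)" for j
  have Hblock: "H (pt r j i) = hb j" if "j \<in> {1..n}" "i < 2*r" for j i
  proof -
    have "pt r j i = (?pi^^i) (pt r j 0)" using pi_pow[of j n 0 r i] that by simp
    moreover have "pt r j 0 \<in> ?P" using pt_range[of j n 0 r] that by auto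
    ultimately show ?thesis unfolding hb_def using Hpow by simp
  qed
  have SH2: "(\<Sum>p\<in>?P. H p) = int (2*r) * (\<Sum>j\<in>{1..n}. hb j)"
  proof -
    have "(\<Sum>p\<in>?P. H p) = (\<Sum>j\<in>{1..n}. \<Sum>i<2*r. H (pt r j i))" by (rule sum_blocks[OF r])
    also have "\<dots> = (\<Sum>j\<in>{1..n}. \<Sum>i<2*r. hb j)" by (intro sum.cong refl) (simp add: Hblock)
    also have "\<dots> = int (2*r) * (\<Sum>j\<in>{1..n}. hb j)" by (simp add: sum_distrib_left)
    finally show ?thesis .
  qed
  have Shb: "(\<Sum>j\<in>{1..n}. hb j) = int (\<Sum>j\<in>{1..n}. d j) - int (\<Sum>j\<in>{1..n}. e j)"
    using SH1 SH2 r by simp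
  have hbinv: "\<forall>j\<in>{1..n}. hb (\<tau>t j) = hb j"
  proof
    fix j assume j: "j \<in> {1..n}"
    have tj: "\<tau>t j \<in> {1..n}" using permutes_in_image[OF tpt] j by blast
    define c where "c = d (\<tau>t j) mod (2*r)"
    have "t (pt r j 0) = pt r (\<tau>t j) c" using cft j r unfolding cform_def c_def by auto
    also have "\<dots> = (?pi^^c) (pt r (\<tau>t j) 0)" using pi_pow[OF tj, of 0 r c] r c_def by simp
    finally have e: "t (pt r j 0) = (?pi^^c) (pt r (\<tau>t j) 0)" .
    have P0: "pt r j 0 \<in> ?P" using pt_range[of j n 0 r] j r by auto
    have P1': "pt r (\<tau>t j) 0 \<in> ?P" using pt_range[of "\<tau>t j" n 0 r] tj r by auto
    have "hb (\<tau>t j) = H ((?pi^^c) (pt r (\<tau>t j) 0))" unfolding hb_def using Hpow[OF P1'] by simp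
    also have "\<dots> = H (t (pt r j 0))" using e by simp
    also have "\<dots> = hb j" unfolding hb_def using Ht[OF P0] .
    finally show "hb (\<tau>t j) = hb j" .
  qed
  have khb: "int (per \<tau>t j) * hb j = int (Ssum \<tau>t d (per \<tau>t j) j) - int (Ssum \<tau>s e (per \<tau>s j2) j2)
     \<and> (per \<tau>t j * gt j = Ssum \<tau>t d (per \<tau>t j) j)"
    if j: "j \<in> {1..n}" and j2: "j2 = blk (inv g (pt r j 0))" for j j2
  proof -
    have P0: "pt r j 0 \<in> ?P" using pt_range[of j n 0 r] j r by auto
    have bj: "blk (pt r j 0) = j" using blkpt[of j 0] j r by simp
    note Q = PP[OF P0, unfolded blk_def[symmetric] bj, folded j2]
    have a1: "per \<tau>t j * gt j = Ssum \<tau>t d (per \<tau>t j) j" unfolding gt_def using Q(2) by simp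
    have a2: "per \<tau>t j * gs j2 = Ssum \<tau>s e (per \<tau>s j2) j2" unfolding gs_def using Q(1) Q(3) by simp
    have "int (per \<tau>t j) * hb j = int (per \<tau>t j * gt j) - int (per \<tau>t j * gs j2)"
      unfolding hb_def H_def bj j2[symmetric] by (simp add: right_diff_distrib)
    then show ?thesis using a1 a2 by simp
  qed
  have perS: "\<forall>j\<in>{1..n}. 0 < per \<tau>t j \<and> (\<tau>t^^(per \<tau>t j)) j = j"
    using per_perm(1,2)[OF tpt] by blast
  have injt: "inj \<tau>t" by (rule permutes_inj[OF tpt])
  have imgt: "\<tau>t ` {1..n} \<subseteq> {1..n}" using permutes_image[OF tpt] by simp
  have D2: "2 dvd (int (\<Sum>j\<in>{1..n}. d j) - int (\<Sum>j\<in>{1..n}. e j))"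
  proof -
    have "2 dvd (\<Sum>j\<in>{1..n}. hb j)"
    proof (rule orbit_sum_dvd[OF injt _ imgt perS hbinv])
      show "finite {1..n}" by simp
      show "\<forall>j\<in>{1..n}. 2 dvd int (per \<tau>t j) * hb j"
      proof
        fix j assume j: "j \<in> {1..n}"
        have P0: "pt r j 0 \<in> ?P" using pt_range[of j n 0 r] j r by auto
        have bj: "blk (pt r j 0) = j" using blkpt[of j 0] j r by simp
        have "even (int (Ssum \<tau>t d (per \<tau>t j) j) - int (Ssum \<tau>s e (per \<tau>s (blk (inv g (pt r j 0)))) (blk (inv g (pt r j 0)))))"
          using PP(4)[OF P0] bj unfolding blk_def by simp
        then show "2 dvd int (per \<tau>t j) * hb j" using khb[OF j refl] by simp
      qed
    qed
    then show ?thesis using Shb by simp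
  qed
  show ?thesis
  proof (intro conjI impI)
    have "(\<Sum>j=1..n. e j + d j) = (\<Sum>j=1..n. e j) + (\<Sum>j=1..n. d j)" by (rule sum.distrib)
    then have eq: "int (\<Sum>j=1..n. e j + d j) = 2 * int (\<Sum>j=1..n. d j) - (int (\<Sum>j=1..n. d j) - int (\<Sum>j=1..n. e j))"
      by simp
    show "even (\<Sum>j = 1..n. e j + d j)"
    proof -
      have "even (int (\<Sum>j=1..n. e j + d j))" unfolding eq using D2 by simp
      then show ?thesis by (metis even_of_nat)
    qed
    assume ev: "even r \<and> even n"
    have M4: "4 dvd 2*r" using ev by auto
    have D4: "4 dvd (int (\<Sum>j\<in>{1..n}. d j) - int (\<Sum>j\<in>{1..n}. e j))"
    proof -
      have "4 dvd (\<Sum>j\<in>{1..n}. hb j)"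
      proof (rule orbit_sum_dvd[OF injt _ imgt perS hbinv])
        show "finite {1..n}" by simp
        show "\<forall>j\<in>{1..n}. 4 dvd int (per \<tau>t j) * hb j"
        proof
          fix j assume j: "j \<in> {1..n}"
          have P0: "pt r j 0 \<in> ?P" using pt_range[of j n 0 r] j r by auto
          have bj: "blk (pt r j 0) = j" using blkpt[of j 0] j r by simp
          have "4 dvd (int (Ssum \<tau>t d (per \<tau>t j) j) - int (Ssum \<tau>s e (per \<tau>s (blk (inv g (pt r j 0)))) (blk (inv g (pt r j 0)))))"
            using PP(5)[OF P0 M4] bj unfolding blk_def by simp
          then show "4 dvd int (per \<tau>t j) * hb j" using khb[OF j refl] by simp
        qed
      qed
      then show ?thesis using Shb by simp
    qed
    have Dn: "2 dvd (\<Sum>j\<in>{1..n}. (int (gt j) - 1))"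
    proof (rule orbit_sum_dvd[OF injt _ imgt perS])
      show "finite {1..n}" by simp
      show "\<forall>j\<in>{1..n}. int (gt (\<tau>t j)) - 1 = int (gt j) - 1" using gtinv by simp
      show "\<forall>j\<in>{1..n}. 2 dvd int (per \<tau>t j) * (int (gt j) - 1)"
      proof
        fix j assume j: "j \<in> {1..n}"
        have P0: "pt r j 0 \<in> ?P" using pt_range[of j n 0 r] j r by auto
        have bj: "blk (pt r j 0) = j" using blkpt[of j 0] j r by simp
        have ev2: "even (Ssum \<tau>t d (per \<tau>t j) j + per \<tau>t j)"
          using PP(6)[OF P0] bj unfolding blk_def by simp
        have "int (per \<tau>t j) * (int (gt j) - 1) = int (Ssum \<tau>t d (per \<tau>t j) j + per \<tau>t j) - 2 * int (per \<tau>t j)"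
          using khb[OF j refl] by (simp add: algebra_simps) (metis of_nat_mult)
        then show "2 dvd int (per \<tau>t j) * (int (gt j) - 1)" using ev2 by simp
      qed
    qed
    have "(\<Sum>j\<in>{1..n}. (int (gt j) - 1)) = int (\<Sum>j\<in>{1..n}. d j) - int n"
      using Sd by (simp add: sum_subtractf)
    then have "even (int (\<Sum>j\<in>{1..n}. d j))" using Dn ev by simp
    then have "4 dvd 2 * int (\<Sum>j=1..n. d j)" by auto
    then have "4 dvd 2 * int (\<Sum>j=1..n. d j) - (int (\<Sum>j=1..n. d j) - int (\<Sum>j=1..n. e j))"
      using D4 by (rule dvd_diff)
    then have "4 dvd int (\<Sum>j=1..n. e j + d j)" unfolding eq .
    then show "(\<Sum>j = 1..n. e j + d j) mod 4 = 0" by presburger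
  qed
qed

end
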